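(* Let $\mathbb{K}$ be an algebraically closed field of characteristic zero and let $D=\partial_x+(ay+b)\partial_y$ be a derivation of $\mathbb{K}[x,y]$ with $a,b\in\mathbb{K}[x]$ and $a\neq 0$. Then $D$ is simple if and only if $\mathrm{Aut}(D)=\{\mathrm{id}\}$.
   Context: A derivation of $\mathbb{K}[x,y]$ is a $\mathbb{K}$-linear map $D$ with $D(fg)=gD(f)+fD(g)$. $D$ is simple if there is no ideal $I$ with $(0)\neq I\neq \mathbb{K}[x,y]$ and $D(I)\subseteq I$. $\mathrm{Aut}(D)$ denotes the group of $\mathbb{K}$-algebra automorphisms $\rho$ of $\mathbb{K}[x,y]$ with $\rho D=D\rho$. *)

theory Defs
  imports "HOL-Computational_Algebra.Polynomial"
begin

text \<open>We model K[x,y] as (K[x])[y], i.e. the type 'a poly poly: a polynomial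
  in y whose coefficients are polynomials in x.\<close>

definition const2 :: "'a::comm_ring_1 \<Rightarrow> 'a poly poly" where
  "const2 c = [:[:c:]:]"

definition alg_closed_field :: "'a::field itself \<Rightarrow> bool" where
  "alg_closed_field _ \<longleftrightarrow> (\<forall>p::'a poly. degree p > 0 \<longrightarrow> (\<exists>z. poly p z = 0))"

definition dx :: "'a::field_char_0 poly poly \<Rightarrow> 'a poly poly" where
  "dx f = map_poly pderiv f"

definition dy :: "'a::field_char_0 poly poly \<Rightarrow> 'a poly poly" where
  "dy f = pderiv f"

definition Dab :: "'a::field_char_0 poly \<Rightarrow> 'a poly \<Rightarrow> 'a poly poly \<Rightarrow> 'a poly poly" where
  "Dab a b f = dx f + [:b, a:] * dy f"

definition is_ideal :: "'a::comm_ring_1 set \<Rightarrow> bool" where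
  "is_ideal I \<longleftrightarrow> 0 \<in> I \<and> (\<forall>f\<in>I. \<forall>g\<in>I. f + g \<in> I) \<and> (\<forall>f\<in>I. \<forall>r. r * f \<in> I)"

definition simple_derivation :: "('a::field poly poly \<Rightarrow> 'a poly poly) \<Rightarrow> bool" where
  "simple_derivation D \<longleftrightarrow>
     \<not> (\<exists>I. is_ideal I \<and> I \<noteq> {0} \<and> I \<noteq> UNIV \<and> D ` I \<subseteq> I)"

definition K_alg_aut :: "('a::field poly poly \<Rightarrow> 'a poly poly) \<Rightarrow> bool" where
  "K_alg_aut \<rho> \<longleftrightarrow> bij \<rho> \<and> (\<forall>f g. \<rho> (f + g) = \<rho> f + \<rho> g) \<and>
     (\<forall>f g. \<rho> (f * g) = \<rho> f * \<rho> g) \<and> (\<forall>c. \<rho> (const2 c) = const2 c)"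

definition Aut :: "('a::field poly poly \<Rightarrow> 'a poly poly) \<Rightarrow> ('a poly poly \<Rightarrow> 'a poly poly) set" where
  "Aut D = {\<rho>. K_alg_aut \<rho> \<and> \<rho> \<circ> D = D \<circ> \<rho>}"

end

theory Submission
  imports Defs
begin

lemma coeff_dx: "coeff (dx f) n = pderiv (coeff f n)"
  unfolding dx_def by (simp add: coeff_map_poly)

lemma dx_0[simp]: "dx 0 = 0" by (simp add: dx_def)

lemma dx_add: "dx (f + g) = dx f + dx g"
  by (rule poly_eqI) (simp add: coeff_dx pderiv_add)

lemma dx_smult: "dx (smult c f) = smult (pderiv c) f + smult c (dx f)"
  by (rule poly_eqI) (simp add: coeff_dx pderiv_mult algebra_simps)

lemma dx_pCons: "dx (pCons c f) = pCons (pderiv c) (dx f)"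
  unfolding dx_def by (simp add: map_poly_pCons)

lemma dx_mult: "dx (f * g) = dx f * g + f * dx g"
proof (induction f)
  case 0
  then show ?case by (simp add: dx_def)
next
  case (pCons c f)
  show ?case
    by (simp add: dx_add dx_smult dx_pCons pCons algebra_simps)
qed

lemma dx_const: "dx [:g:] = [:pderiv g:]"
  using dx_pCons[of g 0] by (simp add: dx_def)

lemma Dab_add: "Dab a b (f + g) = Dab a b f + Dab a b g"
  by (simp add: Dab_def dx_add dy_def pderiv_add algebra_simps smult_add_right)

lemma Dab_mult: "Dab a b (f * g) = Dab a b f * g + f * Dab a b g"
  by (simp add: Dab_def dx_mult dy_def pderiv_mult algebra_simps)

lemma Dab_const: "Dab a b [:g:] = [:pderiv g:]"
  by (simp add: Dab_def dx_const dy_def)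

lemma Dab_0: "Dab a b 0 = 0"
  by (simp add: Dab_def dx_def dy_def)

lemma Dab_minus: "Dab a b (- f) = - Dab a b f"
  using Dab_add[of a b f "-f"] by (simp add: Dab_0 add_eq_0_iff2)

lemma Dab_diff: "Dab a b (f - g) = Dab a b f - Dab a b g"
  using Dab_add[of a b f "-g"] by (simp add: Dab_minus)

lemma coeff_Dab: "coeff (Dab a b f) n = pderiv (coeff f n) + smult (of_nat (Suc n)) (b * coeff f (Suc n))
   + smult (of_nat n) (a * coeff f n)"
  by (cases n) (simp_all add: Dab_def coeff_dx dy_def coeff_pderiv of_nat_poly algebra_simps)

lemma degree_Dab: "degree (Dab a b f) \<le> degree f"
proof -
  have "degree (dx f) \<le> degree f" by (rule degree_le) (simp add: coeff_dx coeff_eq_0)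
  moreover have "degree ([:b,a:] * pderiv f) \<le> degree f"
  proof (cases "degree f")
    case 0 then show ?thesis by (simp add: pderiv_eq_0_iff[symmetric])
  next
    case (Suc k)
    have "degree ([:b,a:] * pderiv f) \<le> degree [:b,a:] + degree (pderiv f)" by (rule degree_mult_le)
    also have "\<dots> \<le> 1 + k" using Suc by (simp add: degree_pderiv)
    finally show ?thesis using Suc by simp
  qed
  ultimately show ?thesis unfolding Dab_def dy_def by (metis degree_add_le)
qed



lemma ideal_principal: "is_ideal {g * P | g. True}"
  unfolding is_ideal_def
  by (auto intro: exI[of _ 0]) (metis distrib_right, metis mult.assoc)

lemma sol_not_simple:
  fixes a b h :: "'a::field_char_0 poly"
  assumes "pderiv h = a * h + b"
  shows "\<not> simple_derivation (Dab a b)"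
proof -
  define P :: "'a poly poly" where "P = [:-h, 1:]"
  define I where "I = {g * P | g. True}"
  have DP: "Dab a b P = [:a:] * P"
  proof -
    have "dx P = [:- pderiv h:]" by (simp add: P_def dx_pCons dx_const pderiv_minus)
    thus ?thesis using assms by (simp add: P_def Dab_def dy_def pderiv_pCons algebra_simps)
  qed
  have "is_ideal I" unfolding I_def by (rule ideal_principal)
  moreover have "P \<in> I" unfolding I_def by (auto intro: exI[of _ 1])
  hence "I \<noteq> {0}" by (auto simp: P_def)
  moreover have "1 \<notin> I"
  proof
    assume "1 \<in> I"
    then obtain g where g: "g * P = 1" unfolding I_def by auto
    hence "g \<noteq> 0" by auto
    hence "degree (g * P) = degree g + degree P" by (intro degree_mult_eq) (simp_all add: P_def)
    hence "degree (g * P) = degree g + 1" by (simp add: P_def)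
    with g show False by simp
  qed
  hence "I \<noteq> UNIV" by auto
  moreover have "Dab a b ` I \<subseteq> I"
  proof
    fix y assume "y \<in> Dab a b ` I"
    then obtain g where "y = Dab a b (g * P)" unfolding I_def by auto
    hence "y = (Dab a b g + g * [:a:]) * P" by (simp add: Dab_mult DP algebra_simps)
    thus "y \<in> I" unfolding I_def by auto
  qed
  ultimately show ?thesis unfolding simple_derivation_def by blast
qed

lemma kernel_const:
  fixes a b :: "'a::field_char_0 poly"
  assumes "simple_derivation (Dab a b)" "Dab a b f = 0"
  shows "\<exists>c. f = const2 c"
proof (rule ccontr)
  assume nc: "\<not> (\<exists>c. f = const2 c)"
  define I where "I = {g * f | g. True}"
  have "is_ideal I" unfolding I_def by (rule ideal_principal)
  moreover have "f \<in> I" unfolding I_def by (auto intro: exI[of _ 1])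
  moreover have "f \<noteq> 0" using nc by (metis const2_def pCons_0_0)
  ultimately have "I \<noteq> {0}" by auto
  moreover have "1 \<notin> I"
  proof
    assume "1 \<in> I"
    then obtain g where g: "g * f = 1" unfolding I_def by auto
    hence "f dvd 1" by (metis dvdI mult.commute)
    then obtain c where c: "f = [:c:]" "c dvd 1" by (auto simp: is_unit_poly_iff)
    then obtain d where "c = [:d:]" by (auto simp: is_unit_poly_iff)
    with c nc show False by (auto simp: const2_def)
  qed
  hence "I \<noteq> UNIV" by auto
  moreover have "Dab a b ` I \<subseteq> I"
  proof
    fix y assume "y \<in> Dab a b ` I"
    then obtain g where "y = Dab a b (g * f)" unfolding I_def by auto
    hence "y = Dab a b g * f" using assms(2) by (simp add: Dab_mult)
    thus "y \<in> I" unfolding I_def by auto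
  qed
  ultimately show False using assms(1) \<open>is_ideal I\<close> unfolding simple_derivation_def by blast
qed

lemma L_zero:
  fixes g r :: "'a::field_char_0 poly"
  assumes "pderiv g = r * g" "r \<noteq> 0"
  shows "g = 0"
proof (rule ccontr)
  assume "g \<noteq> 0"
  hence "r * g \<noteq> 0" using assms by simp
  hence "pderiv g \<noteq> 0" using assms by simp
  hence "degree g > 0" by (simp add: pderiv_eq_0_iff)
  hence "degree (pderiv g) < degree g" by (simp add: degree_pderiv)
  moreover have "degree (r * g) = degree r + degree g" using assms \<open>g\<noteq>0\<close> by (simp add: degree_mult_eq)
  ultimately show False using assms by simp
qed

lemma const_solvable:
  fixes a0 :: "'a::field_char_0"
  assumes "a0 \<noteq> 0"
  shows "\<exists>h. pderiv h = [:a0:] * h + b"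
proof -
  have "\<forall>b::'a poly. degree b \<le> n \<longrightarrow> (\<exists>h. pderiv h = [:a0:] * h + b)" for n
  proof (induction n)
    case 0
    show ?case
    proof (intro allI impI)
      fix b :: "'a poly" assume "degree b \<le> 0"
      then obtain c where b: "b = [:c:]" by (metis degree_0_id le_zero_eq)
      show "\<exists>h. pderiv h = [:a0:] * h + b"
        by (rule exI[of _ "[:-c/a0:]"]) (simp add: b assms)
    qed
  next
    case (Suc n)
    show ?case
    proof (intro allI impI)
      fix b :: "'a poly" assume "degree b \<le> Suc n"
      hence "degree (smult (1/a0) (pderiv b)) \<le> n" by (simp add: degree_pderiv le_diff_conv)
      then obtain h2 where h2: "pderiv h2 = [:a0:] * h2 + smult (1/a0) (pderiv b)" using Suc by blast
      define h1 where "h1 = smult (-1/a0) b"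
      have "pderiv (h1 + h2) = [:a0:] * (h1 + h2) + b"
      proof -
        have "pderiv (h1 + h2) = smult (-1/a0) (pderiv b) + pderiv h2"
          by (simp add: h1_def pderiv_add pderiv_smult pderiv_diff)
        also have "\<dots> = [:a0:] * h2 + smult (-1/a0) (pderiv b) + smult (1/a0) (pderiv b)"
          by (simp add: h2)
        also have "\<dots> = [:a0:] * h2" by (simp add: smult_add_left[symmetric])
        finally show ?thesis using assms by (simp add: h1_def algebra_simps)
      qed
      thus "\<exists>h. pderiv h = [:a0:] * h + b" by blast
    qed
  qed
  thus ?thesis by blast
qed

lemma periodic_const:
  fixes a :: "'a::field_char_0 poly"
  assumes "pcompose a [:c,1:] = a" "c \<noteq> 0"
  shows "\<exists>a0. a = [:a0:]"
proof -
  have per: "poly a (c + x) = poly a x" for x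
    using arg_cong[OF assms(1), of "\<lambda>p. poly p x"] by (simp add: poly_pcompose)
  define P where "P = a - [:poly a 0:]"
  have root: "poly P (of_nat k * c) = 0" for k
  proof (induction k)
    case 0 then show ?case by (simp add: P_def)
  next
    case (Suc k)
    have "poly a (of_nat (Suc k) * c) = poly a (of_nat k * c)"
      using per[of "of_nat k * c"] by (simp add: algebra_simps)
    with Suc show ?case by (simp add: P_def)
  qed
  have "P = 0"
  proof (rule ccontr)
    assume "P \<noteq> 0"
    hence fin: "finite {x. poly P x = 0}" by (rule poly_roots_finite)
    have "range (\<lambda>k::nat. of_nat k * c) \<subseteq> {x. poly P x = 0}" using root by auto
    moreover have "inj (\<lambda>k::nat. of_nat k * c)" using assms(2) by (auto intro!: injI)
    hence "infinite (range (\<lambda>k::nat. of_nat k * c))" by (simp add: range_inj_infinite)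
    ultimately show False using fin finite_subset by blast
  qed
  thus ?thesis unfolding P_def by auto
qed



lemma not_simple_sol:
  fixes a b :: "'a::field_char_0 poly"
  assumes "\<not> simple_derivation (Dab a b)"
  shows "\<exists>h. pderiv h = a * h + b"
proof -
  obtain I where I: "is_ideal I" "I \<noteq> {0}" "I \<noteq> UNIV" "Dab a b ` I \<subseteq> I"
    using assms unfolding simple_derivation_def by blast
  have I0: "0 \<in> I" and Iadd: "\<And>f g. f \<in> I \<Longrightarrow> g \<in> I \<Longrightarrow> f + g \<in> I"
    and Imul: "\<And>f r. f \<in> I \<Longrightarrow> r * f \<in> I" using I(1) unfolding is_ideal_def by auto
  have Idiff: "f - g \<in> I" if "f \<in> I" "g \<in> I" for f g
    using Iadd[OF that(1) Imul[OF that(2), of "-1"]] by simp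
  have Ismult: "smult r f \<in> I" if "f \<in> I" for f r
    using Imul[OF that, of "[:r:]"] by simp
  have ID: "Dab a b f \<in> I" if "f \<in> I" for f using I(4) that by auto
  obtain f00 where f00: "f00 \<in> I" "f00 \<noteq> 0" using I(1,2) unfolding is_ideal_def by blast
  define n where "n = (LEAST n. \<exists>f\<in>I. f \<noteq> 0 \<and> degree f = n)"
  have exn: "\<exists>f\<in>I. f \<noteq> 0 \<and> degree f = n"
    unfolding n_def by (rule LeastI_ex) (use f00 in blast)
  have Z: "n \<le> degree f" if "f \<in> I" "f \<noteq> 0" for f
    unfolding n_def by (rule Least_le) (use that in blast)
  define J where "J = {coeff f n | f. f \<in> I \<and> degree f \<le> n}"
  have Jdiff: "g1 - g2 \<in> J" if gg: "g1 \<in> J" "g2 \<in> J" for g1 g2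
  proof -
    obtain f1 where "f1 \<in> I" "degree f1 \<le> n" "g1 = coeff f1 n"
      using gg(1) unfolding J_def by blast
    moreover obtain f2 where "f2 \<in> I" "degree f2 \<le> n" "g2 = coeff f2 n"
      using gg(2) unfolding J_def by blast
    moreover have "degree (f1 - f2) \<le> n" using calculation by (meson degree_diff_le)
    ultimately show ?thesis unfolding J_def by (auto intro!: exI[of _ "f1 - f2"] Idiff)
  qed
  have Jscale: "r * g \<in> J" if gg: "g \<in> J" for g r
  proof -
    obtain f where f: "f \<in> I" "degree f \<le> n" "g = coeff f n" using gg unfolding J_def by auto
    moreover have "degree (smult r f) \<le> n" using f(2) degree_smult_le order_trans by blast
    ultimately show ?thesis unfolding J_def by (auto intro!: exI[of _ "smult r f"] Ismult)
  qed
  have Jder: "pderiv g \<in> J" if gg: "g \<in> J" for g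
  proof -
    obtain f where f: "f \<in> I" "degree f \<le> n" "g = coeff f n" using gg unfolding J_def by auto
    have "coeff f (Suc n) = 0" using f(2) by (simp add: coeff_eq_0)
    hence c: "coeff (Dab a b f) n = pderiv g + smult (of_nat n) a * g" using f(3) by (simp add: coeff_Dab)
    have "degree (Dab a b f) \<le> n" using f(2) degree_Dab order_trans by blast
    hence "coeff (Dab a b f) n \<in> J" using ID[OF f(1)] unfolding J_def by auto
    moreover have "smult (of_nat n) a * g \<in> J" using Jscale gg by blast
    ultimately have "coeff (Dab a b f) n - smult (of_nat n) a * g \<in> J" by (rule Jdiff)
    thus ?thesis using c by simp
  qed
  obtain g00 where g00: "g00 \<in> J" "g00 \<noteq> 0"
    using exn unfolding J_def by (metis (mono_tags, lifting) leading_coeff_0_iff mem_Collect_eq order_refl)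
  define d where "d = (LEAST d. \<exists>g\<in>J. g \<noteq> 0 \<and> degree g = d)"
  obtain g where g: "g \<in> J" "g \<noteq> 0" "degree g = d"
    using LeastI_ex[of "\<lambda>d. \<exists>g\<in>J. g \<noteq> 0 \<and> degree g = d"] g00 unfolding d_def by blast
  have "d = 0"
  proof (rule ccontr)
    assume "d \<noteq> 0"
    hence "pderiv g \<noteq> 0" using g by (simp add: pderiv_eq_0_iff)
    moreover have "pderiv g \<in> J" using Jder g by blast
    ultimately have "d \<le> degree (pderiv g)" unfolding d_def by (intro Least_le) blast
    thus False using \<open>d \<noteq> 0\<close> g by (simp add: degree_pderiv)
  qed
  then obtain c0 where c0: "g = [:c0:]" "c0 \<noteq> 0" using g by (metis degree_0_id pCons_0_0)
  obtain f where f: "f \<in> I" "degree f \<le> n" "coeff f n = [:c0:]" using g(1) c0 unfolding J_def by auto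
  define f1 where "f1 = smult [:1/c0:] f"
  have f1: "f1 \<in> I" "degree f1 \<le> n" "coeff f1 n = 1"
    using f c0 Ismult degree_smult_le order_trans by (auto simp: f1_def)
  show ?thesis
  proof (cases "n = 0")
    case True
    hence "f1 = 1" using f1 by (metis degree_0_id le_zero_eq one_pCons)
    hence "r \<in> I" for r using Imul[OF f1(1), of r] by simp
    with I(3) show ?thesis by auto
  next
    case False
    define F where "F = Dab a b f1 - smult (smult (of_nat n) a) f1"
    have "F \<in> I" unfolding F_def by (intro Idiff ID Ismult f1)
    have "degree F \<le> n" unfolding F_def
      using degree_Dab[of a b f1] f1(2) degree_smult_le[of _ f1]
      by (meson degree_diff_le order_trans)
    have "coeff f1 (Suc n) = 0" using f1(2) by (simp add: coeff_eq_0)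
    hence "coeff F n = 0" unfolding F_def using f1(3) by (simp add: coeff_Dab)
    have "F = 0"
    proof (rule ccontr)
      assume "F \<noteq> 0"
      hence "degree F = n" using Z[OF \<open>F \<in> I\<close>] \<open>degree F \<le> n\<close> by simp
      with \<open>F \<noteq> 0\<close> \<open>coeff F n = 0\<close> show False by (metis leading_coeff_0_iff)
    qed
    define e where "e = coeff f1 (n - 1)"
    have sn: "Suc (n - 1) = n" using False by simp
    have "coeff F (n - 1) = pderiv e + smult (of_nat n) b + smult (of_nat (n - 1)) (a * e)
       - smult (of_nat n) (a * e)"
      unfolding F_def using f1(3) sn by (simp add: coeff_Dab e_def)
    hence E: "pderiv e + smult (of_nat n) b + smult (of_nat n - 1) (a * e) - smult (of_nat n) (a * e) = 0"
      using \<open>F = 0\<close> False by (simp add: of_nat_diff)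
    hence E2: "pderiv e = a * e - smult (of_nat n) b"
      by (simp add: algebra_simps smult_diff_left)
    define h where "h = smult (-1 / of_nat n) e"
    have "pderiv h = a * h + b" using False
      by (simp add: h_def E2 pderiv_smult pderiv_minus smult_diff_right)
    thus ?thesis by blast
  qed
qed



lemma Dab_chain:
  "Dab a b (pcompose f q) = pcompose (dx f) q + pcompose (pderiv f) q * Dab a b q"
proof (induction f)
  case 0 then show ?case by (simp add: Dab_0)
next
  case (pCons c f)
  show ?case
    by (simp add: pcompose_pCons Dab_add Dab_mult Dab_const dx_pCons pderiv_pCons pCons(2)
        pcompose_add algebra_simps)
qed

lemma times2_smult: "b * (2::'a::field poly) = smult 2 b"
  by (metis mult_2_right one_add_one smult_add_left smult_1_left)

lemma nontrivial_aut:
  fixes a b h :: "'a::field_char_0 poly"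
  assumes "pderiv h = a * h + b"
  shows "Aut (Dab a b) \<noteq> {id}"
proof -
  define Q :: "'a poly poly" where "Q = [:-h, [:2:]:]"
  define S :: "'a poly poly" where "S = [:smult (1/2) h, [:1/2:]:]"
  define \<rho> where "\<rho> = (\<lambda>f. pcompose f Q)"
  have QS: "pcompose Q S = [:0, 1:]" by (simp add: Q_def S_def pcompose_pCons one_pCons)
  have SQ: "pcompose S Q = [:0, 1:]" by (simp add: Q_def S_def pcompose_pCons one_pCons)
  have "bij \<rho>"
  proof (rule o_bij)
    show "\<rho> \<circ> (\<lambda>f. pcompose f S) = id"
      by (rule ext) (simp add: \<rho>_def pcompose_assoc[symmetric] SQ)
    show "(\<lambda>f. pcompose f S) \<circ> \<rho> = id"
      by (rule ext) (simp add: \<rho>_def pcompose_assoc[symmetric] QS)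
  qed
  moreover have DQ: "Dab a b Q = [:b:] + Q * [:a:]"
  proof -
    have "dx Q = [:- pderiv h:]" by (simp add: Q_def dx_pCons dx_const pderiv_minus)
    thus ?thesis using assms by (simp add: Q_def Dab_def dy_def pderiv_pCons algebra_simps times2_smult)
  qed
  have "\<rho> (Dab a b f) = Dab a b (\<rho> f)" for f
  proof -
    have "\<rho> (Dab a b f) = pcompose (dx f) Q + pcompose [:b,a:] Q * pcompose (pderiv f) Q"
      unfolding \<rho>_def Dab_def dy_def pcompose_add pcompose_mult by (rule refl)
    also have "pcompose [:b,a:] Q = [:b:] + Q * [:a:]" by (simp add: pcompose_pCons)
    finally show ?thesis by (simp add: \<rho>_def Dab_chain DQ algebra_simps)
  qed
  hence "\<rho> \<circ> Dab a b = Dab a b \<circ> \<rho>" by auto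
  ultimately have "\<rho> \<in> Aut (Dab a b)"
    unfolding Aut_def K_alg_aut_def by (simp add: \<rho>_def pcompose_add pcompose_mult const2_def)
  moreover have "\<rho> \<noteq> id"
  proof
    assume "\<rho> = id"
    hence "\<rho> [:0,1:] = [:0,1:]" by simp
    hence "coeff (\<rho> [:0,1:]) 1 = 1" by simp
    thus False by (simp add: \<rho>_def Q_def pcompose_pCons one_pCons)
  qed
  ultimately show ?thesis by auto
qed



lemma aut_is_id:
  fixes a b :: "'a::field_char_0 poly"
  assumes simple: "simple_derivation (Dab a b)" and a0: "a \<noteq> 0"
    and rho: "\<rho> \<in> Aut (Dab a b)"
  shows "\<rho> = id"
proof -
  have bij: "bij \<rho>" and radd: "\<And>f g. \<rho> (f + g) = \<rho> f + \<rho> g"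
    and rmul: "\<And>f g. \<rho> (f * g) = \<rho> f * \<rho> g" and rc: "\<And>c. \<rho> (const2 c) = const2 c"
    and comm: "\<rho> \<circ> Dab a b = Dab a b \<circ> \<rho>"
    using rho unfolding Aut_def K_alg_aut_def by auto
  have comm': "\<rho> (Dab a b f) = Dab a b (\<rho> f)" for f using comm by (metis comp_apply)
  have r0: "\<rho> 0 = 0" using radd[of 0 0] by simp
  have rminus: "\<rho> (- f) = - \<rho> f" for f using radd[of f "-f"] r0 by (simp add: add_eq_0_iff2)
  have rdiff: "\<rho> (f - g) = \<rho> f - \<rho> g" for f g using radd[of f "-g"] rminus by simp
  have r1: "\<rho> 1 = 1" using rc[of 1] by (simp add: const2_def one_pCons)
  have inj: "inj \<rho>" using bij bij_is_inj by auto
  define X :: "'a poly poly" where "X = [:[:0,1:]:]"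
  define Y :: "'a poly poly" where "Y = [:0,1:]"
  have DX: "Dab a b X = 1" by (simp add: X_def Dab_const one_pCons pderiv_pCons)
  have DY: "Dab a b Y = [:b,a:]" by (simp add: Y_def Dab_def dy_def dx_pCons dx_const pderiv_pCons)
  have "Dab a b (\<rho> X) = 1" using comm'[of X] DX r1 by simp
  hence "Dab a b (\<rho> X - X) = 0" using DX by (simp add: Dab_diff)
  then obtain c where "\<rho> X - X = const2 c" using kernel_const[OF simple] by blast
  hence pX: "\<rho> X = [:[:c,1:]:]" by (simp add: X_def const2_def algebra_simps)
  define sh where "sh = (\<lambda>g. pcompose g [:c,1:])"
  have rconst: "\<rho> [:g:] = [:sh g:]" for g
  proof (induction g)
    case 0 then show ?case by (simp add: r0 sh_def)
  next
    case (pCons u g)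
    have "[:pCons u g:] = const2 u + X * [:g:]" by (simp add: X_def const2_def)
    hence "\<rho> [:pCons u g:] = \<rho> (const2 u + X * [:g:])" by (rule arg_cong)
    also have "\<dots> = const2 u + \<rho> X * \<rho> [:g:]" by (simp only: radd rmul rc)
    also have "\<dots> = const2 u + [:[:c,1:]:] * [:sh g:]" by (simp only: pX pCons(2))
    also have "\<dots> = [:sh (pCons u g):]" by (simp add: sh_def const2_def pcompose_pCons)
    finally show ?case .
  qed
  define q where "q = \<rho> Y"
  have "\<rho> [:b,a:] = [:sh b:] + q * [:sh a:]"
  proof -
    have "[:b,a:] = [:b:] + Y * [:a:]" by (simp add: Y_def)
    hence "\<rho> [:b,a:] = \<rho> ([:b:] + Y * [:a:])" by (rule arg_cong)
    also have "\<dots> = \<rho> [:b:] + \<rho> Y * \<rho> [:a:]" by (simp only: radd rmul)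
    finally show ?thesis by (simp only: rconst q_def)
  qed
  hence Dq: "Dab a b q = [:sh b:] + smult (sh a) q"
    using comm'[of Y] DY by (simp add: q_def)
  have cq: "pderiv (coeff q n) + smult (of_nat (Suc n)) (b * coeff q (Suc n)) + smult (of_nat n) (a * coeff q n)
      = (if n = 0 then sh b else 0) + sh a * coeff q n" for n
    using arg_cong[OF Dq, of "\<lambda>f. coeff f n"] by (cases n) (simp_all add: coeff_Dab)
  define m where "m = degree q"
  have "m \<noteq> 0"
  proof
    assume "m = 0"
    hence qc: "q = [:coeff q 0:]" unfolding m_def by (metis degree_0_id)
    define g where "g = pcompose (coeff q 0) [:-c,1:]"
    have "sh g = coeff q 0" by (simp add: sh_def g_def pcompose_assoc[symmetric] pcompose_pCons)
    hence "\<rho> [:g:] = \<rho> Y" using qc by (simp add: rconst q_def)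
    hence "[:g:] = Y" using inj by (simp add: inj_eq)
    thus False by (simp add: Y_def)
  qed
  hence "q \<noteq> 0" unfolding m_def by auto
  hence qm: "coeff q m \<noteq> 0" unfolding m_def by simp
  have qS: "coeff q (Suc m) = 0" unfolding m_def by (simp add: coeff_eq_0)
  have Em: "pderiv (coeff q m) = (sh a - smult (of_nat m) a) * coeff q m"
    using cq[of m] qS \<open>m \<noteq> 0\<close> by (simp add: algebra_simps)
  have dsh: "degree (sh a) = degree a" by (simp add: sh_def degree_pcompose)
  have lsh: "lead_coeff (sh a) = lead_coeff a" by (simp add: sh_def lead_coeff_comp)
  have "m = 1"
  proof (rule ccontr)
    assume "m \<noteq> 1"
    have "coeff (sh a - smult (of_nat m) a) (degree a) = (1 - of_nat m) * lead_coeff a"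
      using dsh lsh by (simp add: algebra_simps)
    moreover have "(1 - of_nat m :: 'a) \<noteq> 0" using \<open>m \<noteq> 1\<close> by simp
    ultimately have "sh a - smult (of_nat m) a \<noteq> 0" using a0 by auto
    with Em qm L_zero show False by blast
  qed
  have "sh a = a"
  proof (rule ccontr)
    assume "sh a \<noteq> a"
    hence "sh a - smult (of_nat m) a \<noteq> 0" using \<open>m = 1\<close> by simp
    with Em qm L_zero show False by blast
  qed
  hence "pderiv (coeff q 1) = 0" using Em \<open>m = 1\<close> by simp
  then obtain k where k: "coeff q 1 = [:k:]" using pderiv_iszero by blast
  have "k \<noteq> 0" using qm k \<open>m = 1\<close> by auto
  have E0: "pderiv (coeff q 0) + smult k b = sh b + a * coeff q 0"
    using cq[of 0] k \<open>sh a = a\<close> by (simp add: algebra_simps)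
  have "c = 0"
  proof (rule ccontr)
    assume "c \<noteq> 0"
    then obtain a1 where a1: "a = [:a1:]" using periodic_const \<open>sh a = a\<close> unfolding sh_def by blast
    hence "a1 \<noteq> 0" using a0 by auto
    then obtain h where "pderiv h = [:a1:] * h + b" using const_solvable by blast
    hence "pderiv h = a * h + b" using a1 by simp
    thus False using sol_not_simple simple by blast
  qed
  hence shid: "sh g = g" for g by (simp add: sh_def)
  have "k = 1"
  proof (rule ccontr)
    assume "k \<noteq> 1"
    define h where "h = smult (-1 / (k - 1)) (coeff q 0)"
    have E1: "pderiv (coeff q 0) = a * coeff q 0 + smult (1 - k) b"
      using E0 shid by (simp add: algebra_simps smult_diff_left)
    have "pderiv h = a * h + smult ((-1 / (k - 1)) * (1 - k)) b"
      by (simp add: h_def pderiv_smult pderiv_minus E1 smult_add_right)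
    also have "(-1 / (k - 1)) * (1 - k) = 1" using \<open>k \<noteq> 1\<close> by (simp add: field_simps)
    finally have "pderiv h = a * h + b" by simp
    thus False using sol_not_simple simple by blast
  qed
  have "coeff q 0 = 0"
    using E0 shid \<open>k = 1\<close> L_zero[of "coeff q 0" a] a0 by simp
  have qY: "q = Y"
  proof (rule poly_eqI)
    fix n show "coeff q n = coeff Y n"
    proof (cases n)
      case 0 then show ?thesis using \<open>coeff q 0 = 0\<close> by (simp add: Y_def)
    next
      case (Suc n')
      show ?thesis
      proof (cases n')
        case 0 then show ?thesis using Suc k \<open>k = 1\<close> by (simp add: Y_def one_pCons)
      next
        case (Suc n'')
        hence "coeff q n = 0" using \<open>n = Suc n'\<close> \<open>m = 1\<close> unfolding m_def by (simp add: coeff_eq_0)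
        then show ?thesis using \<open>n = Suc n'\<close> Suc by (simp add: Y_def)
      qed
    qed
  qed
  show ?thesis
  proof (rule ext)
    fix f show "\<rho> f = id f"
    proof (induction f)
      case 0 then show ?case by (simp add: r0)
    next
      case (pCons g f)
      have "pCons g f = [:g:] + Y * f" by (simp add: Y_def)
      hence "\<rho> (pCons g f) = \<rho> ([:g:] + Y * f)" by (rule arg_cong)
      also have "\<dots> = \<rho> [:g:] + \<rho> Y * \<rho> f" by (simp only: radd rmul)
      also have "\<dots> = [:g:] + Y * f" using pCons(2) by (simp only: rconst shid qY[unfolded q_def] id_apply)
      finally have "\<rho> (pCons g f) = [:g:] + Y * f" .
      thus ?case by (simp add: Y_def)
    qed
  qed
qed


theorem theorem1p2:
  fixes a b :: "'a::field_char_0 poly"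
  assumes "alg_closed_field TYPE('a)"
    and "a \<noteq> 0"
  shows "simple_derivation (Dab a b) \<longleftrightarrow> Aut (Dab a b) = {id}"
proof
  assume s: "simple_derivation (Dab a b)"
  have "id \<in> Aut (Dab a b)" unfolding Aut_def K_alg_aut_def by auto
  moreover have "\<rho> = id" if "\<rho> \<in> Aut (Dab a b)" for \<rho> using aut_is_id[OF s assms(2) that] .
  ultimately show "Aut (Dab a b) = {id}" by blast
next
  assume "Aut (Dab a b) = {id}"
  thus "simple_derivation (Dab a b)" using not_simple_sol nontrivial_aut by blast
qed

end
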